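(* Let $g:\mathbb{N}\to\mathbb{N}$ be monotone, strictly inflationary ($g(x)>x$ for all $x$) and super-homogeneous ($g(xy)\ge g(x)\cdot y$ for all $x,y\ge1$), and let $n\in\mathbb{N}$. If $\mathcal{Q}_0\subsetneq\mathcal{Q}_1\subsetneq\dots\subsetneq\mathcal{Q}_\ell$ is a $(g,n)$-controlled chain of congruences on $\mathbb{N}^d$, then $\ell\le 1+g^{\omega^{4d}}(4dn)$.
   Context: A congruence on $\mathbb{N}^d$ is an equivalence relation $\mathcal{Q}\subseteq\mathbb{N}^d\times\mathbb{N}^d$ with $(\mathbf{a},\mathbf{b})\in\mathcal{Q}\Rightarrow(\mathbf{a}+\mathbf{c},\mathbf{b}+\mathbf{c})\in\mathcal{Q}$, viewed as a subset of $\mathbb{N}^{2d}$. A chain $S_0\subsetneq S_1\subsetneq\dots\subsetneq S_\ell$ of subsets of $\mathbb{N}^k$ is $(g,n)$-controlled if for each $i\in[0,\ell-1]$ there is $\mathbf{s}_i\in S_{i+1}\setminus S_i$ with $\|\mathbf{s}_i\|\le g^i(n)$ ($\|\cdot\|$ maximum norm, $g^i$ the $i$-fold iterate). Hardy hierarchy relative to $g$: $g^0(x)=x$, $g^{\alpha+1}(x)=g^\alpha(g(x))$, $g^\lambda(x)=g^{\lambda(x)}(x)$ for limit $\lambda\le\omega^\omega$, using the fundamental sequences $\omega^\omega(x)=\omega^{x+1}$ and $(\beta+\omega^{k+1})(x)=\beta+\omega^k\cdot(x+1)$ where $\beta+\omega^{k+1}$ is in Cantor normal form. *)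

theory Defs
  imports Main "HOL-Library.Multiset_Order"
begin

definition vecs :: "nat \<Rightarrow> nat list set" where
  "vecs d = {v. length v = d}"

definition vadd :: "nat list \<Rightarrow> nat list \<Rightarrow> nat list" where
  "vadd a b = map2 (+) a b"

definition vnorm :: "nat list \<Rightarrow> nat" where
  "vnorm v = foldr max v 0"

definition pnorm :: "nat list \<times> nat list \<Rightarrow> nat" where
  "pnorm p = vnorm (fst p @ snd p)"

definition congruence :: "nat \<Rightarrow> (nat list \<times> nat list) set \<Rightarrow> bool" where
  "congruence d Q \<longleftrightarrow> equiv (vecs d) Q \<and>
     (\<forall>a b c. (a, b) \<in> Q \<longrightarrow> c \<in> vecs d \<longrightarrow> (vadd a c, vadd b c) \<in> Q)"

definition controlled_chain ::
  "(nat \<Rightarrow> nat) \<Rightarrow> nat \<Rightarrow> ('a \<Rightarrow> nat) \<Rightarrow> (nat \<Rightarrow> 'a set) \<Rightarrow> nat \<Rightarrow> bool" where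
  "controlled_chain g n nrm S l \<longleftrightarrow>
     (\<forall>i<l. S i \<subset> S (Suc i)) \<and>
     (\<forall>i<l. \<exists>s \<in> S (Suc i) - S i. nrm s \<le> (g ^^ i) n)"

text \<open>Ordinals below \<open>\<omega>\<^sup>\<omega>\<close> in Cantor normal form
  \<open>\<omega>^e_n + ... + \<omega>^e_1\<close> (with \<open>e_n \<ge> ... \<ge> e_1\<close>) are represented by the
  ascending list of exponents [e_1, ..., e_n] (smallest term first).
  Hardy hierarchy relative to g:
  \<open>g^0 = id\<close>, \<open>g^(\<alpha>+1)(x) = g^\<alpha>(g x)\<close>, \<open>g^(\<beta>+\<omega>^(k+1))(x) = g^(\<beta>+\<omega>^k\<cdot>(x+1))(x)\<close>.\<close>

function hardy :: "(nat \<Rightarrow> nat) \<Rightarrow> nat list \<Rightarrow> nat \<Rightarrow> nat" where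
  "hardy g [] x = x"
| "hardy g (0 # rs) x = hardy g rs (g x)"
| "hardy g (Suc k # rs) x = hardy g (replicate (Suc x) k @ rs) x"
  by pat_completeness auto
termination
proof (relation "inv_image {(M :: nat multiset, N). M < N} (\<lambda>(g, rs, x). mset rs)")
  show "wf (inv_image {(M :: nat multiset, N). M < N} (\<lambda>(g::nat\<Rightarrow>nat, rs::nat list, x::nat). mset rs))"
    by (rule wf_inv_image) (metis wfp_less_multiset[where 'a=nat, OF wfp_on_less] wfp_def)
next
  fix g :: "nat \<Rightarrow> nat" and rs x
  show "((g, rs, g x), g, 0 # rs, x) \<in> inv_image {(M :: nat multiset, N). M < N} (\<lambda>(g, rs, x). mset rs)"
    using subset_implies_multp[of "mset rs" "add_mset 0 (mset rs)" "(<)"]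
    by (simp add: less_multiset_def)
next
  fix g :: "nat \<Rightarrow> nat" and k rs x
  have "mset (replicate (Suc x) k) < {#Suc k#}"
    by (rule all_lt_Max_imp_lt_mset) auto
  then have "mset (replicate (Suc x) k) + mset rs < {#Suc k#} + mset rs"
    by simp
  then show "((g, replicate (Suc x) k @ rs, x), g, Suc k # rs, x)
      \<in> inv_image {(M :: nat multiset, N). M < N} (\<lambda>(g, rs, x). mset rs)"
    by simp
qed

definition hardy_omega_pow :: "(nat \<Rightarrow> nat) \<Rightarrow> nat \<Rightarrow> nat \<Rightarrow> nat" where
  "hardy_omega_pow g k = hardy g [k]"

end

theory Submission
  imports Defs
begin


lemma hardy_append: "hardy g (xs @ ys) x = hardy g ys (hardy g xs x)"
  by (induction g xs x arbitrary: ys rule: hardy.induct) simp_all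

lemma hardy_cons: "hardy g (a # xs) x = hardy g xs (hardy g [a] x)"
  using hardy_append[of g "[a]" xs x] by simp

lemma hardy_rep: "hardy g (replicate c k) x = (hardy g [k] ^^ c) x"
proof (induction c arbitrary: x)
  case 0 then show ?case by simp
next
  case (Suc c)
  have "hardy g (replicate (Suc c) k) x = hardy g (replicate c k) (hardy g [k] x)"
    using hardy_cons[of g k "replicate c k" x] by (simp only: replicate_Suc)
  also have "\<dots> = (hardy g [k] ^^ Suc c) x" using Suc by (simp only: funpow_Suc_right o_apply)
  finally show ?case .
qed

lemma hardy_Suc: "hardy g [Suc k] x = (hardy g [k] ^^ Suc x) x"
proof -
  have "hardy g [Suc k] x = hardy g (replicate (Suc x) k) x"
    by (simp only: hardy.simps(3) append_Nil2)
  then show ?thesis by (simp only: hardy_rep)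
qed

lemma hardy_zero: "hardy g [0] x = g x" by simp

lemma fp_mono: "mono f \<Longrightarrow> x \<le> y \<Longrightarrow> (f ^^ n) x \<le> ((f::nat\<Rightarrow>nat) ^^ n) y"
  by (induction n) (auto simp: mono_def)

lemma fp_infl: "\<forall>x. x < (f::nat\<Rightarrow>nat) x \<Longrightarrow> x + n \<le> (f ^^ n) x"
proof (induction n)
  case 0 then show ?case by simp
next
  case (Suc n)
  have "(f ^^ n) x < f ((f ^^ n) x)" using Suc.prems by blast
  moreover have "x + n \<le> (f ^^ n) x" using Suc.IH Suc.prems by blast
  ultimately show ?case by simp
qed

lemma fp_le: "\<forall>x. x < (f::nat\<Rightarrow>nat) x \<Longrightarrow> a \<le> b \<Longrightarrow> (f ^^ a) x \<le> (f ^^ b) x"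
proof -
  assume i: "\<forall>x. x < f x" and ab: "a \<le> b"
  have "(f ^^ b) x = (f ^^ (b - a)) ((f ^^ a) x)"
    using ab by (metis funpow_add le_add_diff_inverse2 o_apply)
  also have "\<dots> \<ge> (f ^^ a) x" using fp_infl[OF i] by (metis le_add1 order_trans)
  finally show ?thesis .
qed

locale gass =
  fixes g :: "nat \<Rightarrow> nat"
  assumes gm: "mono g" and gi: "\<forall>x. x < g x"
begin

lemma hh_props: "mono (hardy g [k]) \<and> (\<forall>x. x < hardy g [k] x)"
proof (induction k)
  case 0
  then show ?case using gm gi by (simp add: mono_def)
next
  case (Suc k)
  then have m: "mono (hardy g [k])" and i: "\<forall>x. x < hardy g [k] x" by auto
  have "mono (hardy g [Suc k])"
  proof (rule monoI)
    fix x y :: nat assume xy: "x \<le> y"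
    have "(hardy g [k] ^^ Suc x) x \<le> (hardy g [k] ^^ Suc y) x" by (rule fp_le[OF i]) (use xy in simp)
    also have "\<dots> \<le> (hardy g [k] ^^ Suc y) y" using fp_mono[OF m xy] .
    finally show "hardy g [Suc k] x \<le> hardy g [Suc k] y" by (simp only: hardy_Suc)
  qed
  moreover have "\<forall>x. x < hardy g [Suc k] x"
  proof
    fix x
    have "x + Suc x \<le> (hardy g [k] ^^ Suc x) x" using fp_infl[OF i] .
    then show "x < hardy g [Suc k] x" by (simp only: hardy_Suc)
  qed
  ultimately show ?case by blast
qed

lemma hh_mono: "x \<le> y \<Longrightarrow> hardy g [k] x \<le> hardy g [k] y"
  using hh_props by (auto simp: mono_def)

lemma hh_infl: "\<forall>x. x < hardy g [k] x"
  using hh_props by auto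

lemma hh_le: "a \<le> b \<Longrightarrow> hardy g [a] x \<le> hardy g [b] x"
proof (induction b)
  case 0 then show ?case by simp
next
  case (Suc b)
  show ?case
  proof (cases "a = Suc b")
    case True then show ?thesis by simp
  next
    case False
    then have "hardy g [a] x \<le> hardy g [b] x" using Suc by simp
    also have "\<dots> = (hardy g [b] ^^ 1) x" by simp
    also have "\<dots> \<le> (hardy g [b] ^^ Suc x) x" by (rule fp_le[OF hh_infl]) simp
    finally show ?thesis by (simp only: hardy_Suc)
  qed
qed

lemma hardy_mi: "mono (hardy g xs) \<and> (\<forall>x. x + length xs \<le> hardy g xs x)"
proof (induction xs)
  case Nil then show ?case by (simp add: mono_def)
next
  case (Cons a xs)
  have "mono (hardy g (a # xs))"
  proof (rule monoI)
    fix x y :: nat assume "x \<le> y"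
    then have "hardy g [a] x \<le> hardy g [a] y" using hh_props by (auto simp: mono_def)
    then have "hardy g xs (hardy g [a] x) \<le> hardy g xs (hardy g [a] y)"
      using Cons by (auto simp: mono_def)
    then show "hardy g (a # xs) x \<le> hardy g (a # xs) y"
      using hardy_cons[of g a xs x] hardy_cons[of g a xs y] by simp
  qed
  moreover have "x + length (a # xs) \<le> hardy g (a # xs) x" for x
  proof -
    have "x < hardy g [a] x" using hh_infl by auto
    moreover have "hardy g [a] x + length xs \<le> hardy g xs (hardy g [a] x)" using Cons by auto
    ultimately show ?thesis using hardy_cons[of g a xs x] by simp
  qed
  ultimately show ?case by blast
qed

lemma hardy_mono: "x \<le> y \<Longrightarrow> hardy g xs x \<le> hardy g xs y"
  using hardy_mi by (auto simp: mono_def)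

lemma hardy_ge: "x + length xs \<le> hardy g xs x"
  using hardy_mi by auto

lemma hardy_pre: "\<forall>a\<in>set pre. a \<le> j \<Longrightarrow> hardy g pre x \<le> (hardy g [j] ^^ length pre) x"
proof (induction pre arbitrary: x)
  case Nil then show ?case by simp
next
  case (Cons a pre)
  have "hardy g (a # pre) x = hardy g pre (hardy g [a] x)" by (rule hardy_cons)
  also have "\<dots> \<le> (hardy g [j] ^^ length pre) (hardy g [a] x)" using Cons by auto
  also have "\<dots> \<le> (hardy g [j] ^^ length pre) (hardy g [j] x)"
    by (rule fp_mono) (use Cons.prems hh_le hh_props in auto)
  also have "\<dots> = (hardy g [j] ^^ length (a # pre)) x" by (simp add: funpow_Suc_right del: funpow.simps)
  finally show ?case .
qed

lemma key:
  assumes pre: "\<forall>a\<in>set pre. a \<le> j" and cy: "c \<le> y"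
  shows "hardy g (pre @ replicate c j @ post) (g y) \<le> hardy g (pre @ Suc j # post) y"
proof -
  let ?h = "hardy g [j]"
  define w where "w = hardy g pre y"
  have i: "\<forall>x. x < ?h x" using hh_infl by auto
  have m: "mono ?h" using hh_props by auto
  have "hardy g pre (g y) \<le> (?h ^^ length pre) (g y)" using hardy_pre[OF pre] .
  also have "\<dots> \<le> (?h ^^ length pre) (?h y)"
    using fp_mono[OF m] hh_le[of 0 j y] by simp
  also have "\<dots> = (?h ^^ Suc (length pre)) y" by (simp add: funpow_Suc_right del: funpow.simps)
  finally have 1: "hardy g pre (g y) \<le> (?h ^^ Suc (length pre)) y" .
  have "(?h ^^ c) (hardy g pre (g y)) \<le> (?h ^^ c) ((?h ^^ Suc (length pre)) y)"
    using fp_mono[OF m 1] .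
  also have "\<dots> = (?h ^^ (c + Suc (length pre))) y" by (simp only: funpow_add o_apply)
  also have "\<dots> \<le> (?h ^^ Suc w) y"
  proof -
    have "y + length pre \<le> w" unfolding w_def using hardy_ge .
    then have "c + Suc (length pre) \<le> Suc w" using cy by simp
    then show ?thesis by (rule fp_le[OF i])
  qed
  also have "\<dots> \<le> (?h ^^ Suc w) w"
    by (rule fp_mono[OF m]) (use hardy_ge[of y pre] in \<open>simp add: w_def\<close>)
  also have "\<dots> = hardy g [Suc j] w" by (simp only: hardy_Suc)
  finally have 2: "(?h ^^ c) (hardy g pre (g y)) \<le> hardy g [Suc j] w" .
  have "hardy g (pre @ replicate c j @ post) (g y) = hardy g post ((?h ^^ c) (hardy g pre (g y)))"
    by (simp add: hardy_append hardy_rep)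
  also have "\<dots> \<le> hardy g post (hardy g [Suc j] w)" using hardy_mono[OF 2] .
  also have "\<dots> = hardy g (Suc j # post) w" by (rule hardy_cons[symmetric])
  also have "\<dots> = hardy g (pre @ Suc j # post) y" unfolding w_def by (rule hardy_append[symmetric])
  finally show ?thesis .
qed

end


definition vle :: "nat list \<Rightarrow> nat list \<Rightarrow> bool" where
  "vle u v \<longleftrightarrow> list_all2 (\<le>) u v"

definition inslice :: "nat \<Rightarrow> nat list \<times> nat list \<Rightarrow> nat list \<Rightarrow> bool" where
  "inslice D s v \<longleftrightarrow> (\<forall>p<D. p \<notin> set (fst s) \<longrightarrow> v ! p = snd s ! p)"

definition newsl :: "nat list \<Rightarrow> nat list \<Rightarrow> (nat list \<times> nat list) list" where
  "newsl v fr = concat (map (\<lambda>p. map (\<lambda>a. (remove1 p fr, v[p := a])) [0..<v ! p]) fr)"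

lemma newsl_length: "length (newsl v fr) = sum_list (map (\<lambda>p. v ! p) fr)"
  unfolding newsl_def by (simp add: length_concat o_def)

lemma newsl_dims: "map (length \<circ> fst) (newsl v fr) = replicate (length (newsl v fr)) (length fr - 1)"
proof -
  have "\<forall>s\<in>set (newsl v fr). (length \<circ> fst) s = length fr - 1"
    unfolding newsl_def by (auto simp: length_remove1)
  then have "map (length \<circ> fst) (newsl v fr) = map (\<lambda>_. length fr - 1) (newsl v fr)"
    by (intro map_cong) auto
  then show ?thesis by (simp only: map_replicate_const)
qed

lemma sum_sub: "distinct fr \<Longrightarrow> set fr \<subseteq> {..<length v} \<Longrightarrow> sum_list (map (\<lambda>p. v ! p) fr) \<le> sum_list (v :: nat list)"
proof -
  assume d: "distinct fr" and s: "set fr \<subseteq> {..<length v}"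
  have "sum_list (map (\<lambda>p. v ! p) fr) = sum (\<lambda>p. v ! p) (set fr)"
    using d by (simp add: sum_list_distinct_conv_sum_set)
  also have "\<dots> \<le> sum (\<lambda>p. v ! p) {..<length v}"
    using s by (intro sum_mono2) auto
  also have "\<dots> = sum_list v" by (simp add: sum_list_sum_nth atLeast0LessThan)
  finally show ?thesis .
qed

lemma newsl_cover:
  assumes "length v = D" "length w = D" "inslice D (fr, u) v" "inslice D (fr, u) w" "\<not> vle v w"
  shows "\<exists>s\<in>set (newsl v fr). inslice D s w"
proof -
  from assms obtain p where p: "p < D" "\<not> v ! p \<le> w ! p"
    unfolding vle_def by (auto simp: list_all2_conv_all_nth)
  have pf: "p \<in> set fr"
  proof (rule ccontr)
    assume "p \<notin> set fr"
    then have "v ! p = w ! p" using assms(3,4) p(1) unfolding inslice_def by auto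
    then show False using p by simp
  qed
  let ?s = "(remove1 p fr, v[p := w ! p])"
  have "w ! p \<in> {0..<v ! p}" using p by simp
  then have "?s \<in> set (map (\<lambda>a. (remove1 p fr, v[p := a])) [0..<v ! p])" by simp
  then have "?s \<in> set (newsl v fr)" unfolding newsl_def using pf by auto
  moreover have "inslice D ?s w"
    unfolding inslice_def
  proof (intro allI impI)
    fix q assume q: "q < D" "q \<notin> set (fst ?s)"
    show "w ! q = snd ?s ! q"
    proof (cases "q = p")
      case True then show ?thesis using p assms(1) by simp
    next
      case False
      then have "q \<notin> set fr" using q by (simp add: in_set_remove1)
      then show ?thesis using assms(3,4) q False unfolding inslice_def by auto
    qed
  qed
  ultimately show ?thesis by blast
qed

lemma newsl_wf: "distinct fr \<Longrightarrow> set fr \<subseteq> {..<D} \<Longrightarrow> s \<in> set (newsl v fr) \<Longrightarrow> distinct (fst s) \<and> set (fst s) \<subseteq> {..<D}"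
proof -
  assume a: "distinct fr" "set fr \<subseteq> {..<D}" "s \<in> set (newsl v fr)"
  then obtain p where "s \<in> set (map (\<lambda>a. (remove1 p fr, v[p := a])) [0..<v ! p])"
    unfolding newsl_def by auto
  then have "fst s = remove1 p fr" by auto
  then show ?thesis using a(1,2) set_remove1_subset[of p fr] by auto
qed

lemma sorted_split:
  "sorted xs \<Longrightarrow> (k::nat) \<in> set xs \<Longrightarrow> \<exists>pre post. xs = pre @ k # post \<and> (\<forall>a\<in>set pre. a < k) \<and> (\<forall>a\<in>set post. k \<le> a)"
proof (induction xs)
  case Nil then show ?case by simp
next
  case (Cons x xs)
  show ?case
  proof (cases "x = k")
    case True then show ?thesis using Cons.prems by (intro exI[of _ "[]"] exI[of _ xs]) auto
  next
    case False
    then have "k \<in> set xs" "x < k" using Cons.prems by auto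
    then obtain pre post where "xs = pre @ k # post" "\<forall>a\<in>set pre. a < k" "\<forall>a\<in>set post. k \<le> a"
      using Cons by auto
    then show ?thesis using \<open>x < k\<close> by (intro exI[of _ "x # pre"] exI[of _ post]) auto
  qed
qed

context gass
begin

lemma bad_len:
  assumes sh: "\<forall>x y. x \<ge> 1 \<longrightarrow> y \<ge> 1 \<longrightarrow> g (x*y) \<ge> g x * y" and n1: "n \<ge> 1"
    and lenv: "\<forall>j<l. length (v j) = D"
    and sumv: "\<forall>j<l. sum_list (v j) \<le> D * (g^^j) n"
    and bad: "\<forall>i j. i < j \<longrightarrow> j < l \<longrightarrow> \<not> vle (v i) (v j)"
  shows "i0 \<le> l \<Longrightarrow> (\<forall>j. i0 \<le> j \<longrightarrow> j < l \<longrightarrow> (\<exists>s\<in>set S. inslice D s (v j)))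
    \<Longrightarrow> (\<forall>s\<in>set S. distinct (fst s) \<and> set (fst s) \<subseteq> {..<D}) \<Longrightarrow> D * (g^^i0) n \<le> y
    \<Longrightarrow> l - i0 \<le> hardy g (sort (map (length \<circ> fst) S)) y - y"
proof (induction "l - i0" arbitrary: i0 S y)
  case 0 then show ?case by simp
next
  case (Suc m)
  have i0l: "i0 < l" using Suc by linarith
  obtain s where s: "s \<in> set S" "inslice D s (v i0)" using Suc.prems(2) i0l by blast
  obtain fr u where sfu: "s = (fr, u)" by fastforce
  let ?V = "v i0"
  let ?dim = "length \<circ> fst :: nat list \<times> nat list \<Rightarrow> nat"
  define S' where "S' = remove1 s S @ newsl ?V fr"
  define k where "k = length fr"
  define c where "c = length (newsl ?V fr)"
  define L where "L = sort (map ?dim S)"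
  have kL: "k \<in> set L" unfolding L_def k_def using s(1) sfu by force
  obtain pre post where pp: "L = pre @ k # post" "\<forall>a\<in>set pre. a < k" "\<forall>a\<in>set post. k \<le> a"
    using sorted_split[OF _ kL] unfolding L_def by auto
  have "distinct (fst s) \<and> set (fst s) \<subseteq> {..<D}" using Suc.prems(3) s(1) by blast
  then have wffr: "distinct fr" "set fr \<subseteq> {..<D}" using sfu by auto
  have gi0: "1 \<le> (g^^i0) n" using fp_infl[OF gi, of n i0] n1 by simp
  have "c \<le> sum_list ?V" unfolding c_def newsl_length
    using sum_sub[OF wffr(1)] wffr(2) lenv i0l by auto
  also have "\<dots> \<le> D * (g^^i0) n" using sumv i0l by auto
  also have "\<dots> \<le> y" using Suc.prems(4) .
  finally have cy: "c \<le> y" .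
  have sortS': "sort (map ?dim S') = pre @ replicate c (k - 1) @ post"
  proof (rule properties_for_sort)
    have 1: "mset (map ?dim (remove1 s S)) = mset (map ?dim S) - {#?dim s#}"
      using s(1) by (simp add: mset_remove1 image_mset_Diff)
    have 2: "mset (map ?dim S) = mset (pre @ k # post)"
      using pp(1) unfolding L_def by (metis mset_sort)
    have 3: "?dim s = k" using sfu k_def by simp
    have 4: "mset (map ?dim S') = mset (map ?dim (remove1 s S)) + mset (replicate c (k - 1))"
      unfolding S'_def c_def k_def by (simp only: map_append mset_append newsl_dims)
    have "mset (map ?dim S') = mset (pre @ replicate c (k - 1) @ post)"
      unfolding 4 1 2 3 by simp
    then show "mset (pre @ replicate c (k - 1) @ post) = mset (map ?dim S')" by simp
    have "sorted L" unfolding L_def by simp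
    then show "sorted (pre @ replicate c (k - 1) @ post)"
      using pp by (auto simp: sorted_append)
  qed
  have step: "hardy g (sort (map ?dim S')) (g y) \<le> hardy g L y"
  proof (cases k)
    case 0
    then have "pre = []" using pp(2) by auto
    moreover have "c = 0" using 0 unfolding c_def k_def newsl_def by simp
    ultimately show ?thesis using sortS' pp(1) 0 by simp
  next
    case (Suc j)
    have "\<forall>a\<in>set pre. a \<le> j" using pp(2) Suc by auto
    from key[OF this cy, of post] show ?thesis using sortS' pp(1) Suc by simp
  qed
  have IH: "l - Suc i0 \<le> hardy g (sort (map ?dim S')) (g y) - g y"
  proof (rule Suc.hyps(1))
    show "m = l - Suc i0" using Suc.hyps(2) by linarith
    show "Suc i0 \<le> l" using i0l by simp
    show "\<forall>j. Suc i0 \<le> j \<longrightarrow> j < l \<longrightarrow> (\<exists>s\<in>set S'. inslice D s (v j))"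
    proof (intro allI impI)
      fix j assume j: "Suc i0 \<le> j" "j < l"
      then have "i0 \<le> j" by simp
      then obtain t where t: "t \<in> set S" "inslice D t (v j)" using Suc.prems(2) j(2) by blast
      show "\<exists>s\<in>set S'. inslice D s (v j)"
      proof (cases "t = s")
        case False
        then show ?thesis using t unfolding S'_def by (auto simp: in_set_remove1)
      next
        case True
        have "\<exists>s\<in>set (newsl ?V fr). inslice D s (v j)"
          by (rule newsl_cover[of _ D _ fr u]) (use lenv i0l j s t True sfu bad in auto)
        then show ?thesis unfolding S'_def by auto
      qed
    qed
    show "\<forall>s\<in>set S'. distinct (fst s) \<and> set (fst s) \<subseteq> {..<D}"
    proof
      fix t assume "t \<in> set S'"
      then have "t \<in> set (remove1 s S) \<or> t \<in> set (newsl ?V fr)" unfolding S'_def by simp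
      then show "distinct (fst t) \<and> set (fst t) \<subseteq> {..<D}"
      proof
        assume "t \<in> set (remove1 s S)"
        then have "t \<in> set S" using set_remove1_subset by fast
        then show ?thesis using Suc.prems(3) by blast
      qed (rule newsl_wf[OF wffr])
    qed
    show "D * (g^^Suc i0) n \<le> g y"
    proof (cases "D = 0")
      case True then show ?thesis by simp
    next
      case False
      have "D * (g^^Suc i0) n = g ((g^^i0) n) * D" by simp
      also have "\<dots> \<le> g ((g^^i0) n * D)" using sh gi0 False by auto
      also have "\<dots> \<le> g y" using gm Suc.prems(4) by (auto simp: mono_def mult.commute)
      finally show ?thesis .
    qed
  qed
  have "g y \<le> hardy g (sort (map ?dim S')) (g y)" using hardy_ge[of "g y" "sort (map ?dim S')"] by linarith
  moreover have "y < g y" using gi by auto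
  ultimately show ?case using IH step Suc.hyps(2) unfolding L_def by linarith
qed

end


fun lexl :: "nat list \<Rightarrow> nat list \<Rightarrow> bool" where
  "lexl (x # xs) (y # ys) = (x < y \<or> (x = y \<and> lexl xs ys))"
| "lexl _ _ = False"

lemma lexl_irrefl: "\<not> lexl a a"
  by (induction a) auto

lemma lexl_trans: "lexl a b \<Longrightarrow> lexl b c \<Longrightarrow> lexl a c"
proof (induction a arbitrary: b c)
  case Nil then show ?case by simp
next
  case (Cons x xs)
  then obtain y ys where b: "b = y # ys" by (cases b) auto
  with Cons obtain z zs where c: "c = z # zs" by (cases c) auto
  show ?case using Cons b c by auto
qed

lemma lexl_total: "length a = length b \<Longrightarrow> a \<noteq> b \<Longrightarrow> lexl a b \<or> lexl b a"
proof (induction a arbitrary: b)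
  case Nil then show ?case by simp
next
  case (Cons x xs)
  then obtain y ys where b: "b = y # ys" by (cases b) auto
  show ?case using Cons b by (cases "x = y") auto
qed

lemma lexl_add: "length a = length c \<Longrightarrow> length b = length c \<Longrightarrow> lexl a b \<Longrightarrow> lexl (vadd a c) (vadd b c)"
proof (induction a arbitrary: b c)
  case Nil then show ?case by simp
next
  case (Cons x xs)
  then obtain y ys where b: "b = y # ys" by (cases b) auto
  with Cons obtain z zs where c: "c = z # zs" by (cases c) auto
  show ?case using Cons b c by (auto simp: vadd_def)
qed

lemma length_vadd: "length a = length c \<Longrightarrow> length (vadd a c) = length a"
  by (simp add: vadd_def)

lemma sum_vadd: "length a = length c \<Longrightarrow> sum_list (vadd a c) = sum_list a + sum_list (c :: nat list)"
proof (induction a arbitrary: c)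
  case Nil then show ?case by (simp add: vadd_def)
next
  case (Cons x xs)
  then obtain z zs where c: "c = z # zs" by (cases c) auto
  show ?case using Cons c by (simp add: vadd_def)
qed

definition grl :: "nat list \<Rightarrow> nat list \<Rightarrow> bool" where
  "grl a b \<longleftrightarrow> sum_list a < sum_list b \<or> (sum_list a = sum_list b \<and> lexl a b)"

lemma grl_irrefl: "\<not> grl a a" unfolding grl_def using lexl_irrefl by auto

lemma grl_trans: "grl a b \<Longrightarrow> grl b c \<Longrightarrow> grl a c"
  unfolding grl_def using lexl_trans by fastforce

lemma grl_total: "length a = length b \<Longrightarrow> a \<noteq> b \<Longrightarrow> grl a b \<or> grl b a"
  unfolding grl_def using lexl_total by fastforce

lemma grl_add: "length a = length c \<Longrightarrow> length b = length c \<Longrightarrow> grl a b \<Longrightarrow> grl (vadd a c) (vadd b c)"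
  unfolding grl_def using lexl_add sum_vadd by auto

definition Rd :: "nat \<Rightarrow> (nat list \<times> nat list) set" where
  "Rd d = {(b, a). b \<in> vecs d \<and> a \<in> vecs d \<and> grl b a}"

lemma wf_Rd: "wf (Rd d)"
proof (rule wf_finite_segments)
  show "irrefl (Rd d)" unfolding Rd_def irrefl_def using grl_irrefl by auto
  show "trans (Rd d)" unfolding Rd_def trans_def using grl_trans by blast
  fix a
  have "{b. (b, a) \<in> Rd d} \<subseteq> {xs. set xs \<subseteq> {0..sum_list a} \<and> length xs = d}"
  proof
    fix b assume "b \<in> {b. (b, a) \<in> Rd d}"
    then have "length b = d" "sum_list b \<le> sum_list a"
      unfolding Rd_def grl_def vecs_def by auto
    moreover have "\<forall>x\<in>set b. x \<le> sum_list b" using member_le_sum_list by blast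
    ultimately show "b \<in> {xs. set xs \<subseteq> {0..sum_list a} \<and> length xs = d}" by fastforce
  qed
  then show "finite {b. (b, a) \<in> Rd d}"
    using finite_lists_length_eq[of "{0..sum_list a}" d] finite_subset by blast
qed

definition NQ :: "nat \<Rightarrow> (nat list \<times> nat list) set \<Rightarrow> nat list set" where
  "NQ d Q = {a \<in> vecs d. \<exists>b. (a, b) \<in> Q \<and> grl b a}"

lemma NQ_mono: "Q \<subseteq> Q' \<Longrightarrow> NQ d Q \<subseteq> NQ d Q'"
  unfolding NQ_def by blast

lemma cong_sub: "congruence d Q \<Longrightarrow> (a, b) \<in> Q \<Longrightarrow> a \<in> vecs d \<and> b \<in> vecs d"
  unfolding congruence_def equiv_def by blast

lemma NQ_up: assumes "congruence d Q" "a \<in> NQ d Q" "c \<in> vecs d"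
  shows "vadd a c \<in> NQ d Q"
proof -
  from assms(2) obtain b where b: "a \<in> vecs d" "(a, b) \<in> Q" "grl b a" unfolding NQ_def by blast
  have bv: "b \<in> vecs d" using cong_sub[OF assms(1) b(2)] by blast
  have "(vadd a c, vadd b c) \<in> Q" using assms(1) b(2) assms(3) unfolding congruence_def by blast
  moreover have "grl (vadd b c) (vadd a c)"
    using grl_add b(1,3) bv assms(3) unfolding vecs_def by auto
  moreover have "vadd a c \<in> vecs d" using b(1) assms(3) unfolding vecs_def by (simp add: vadd_def)
  ultimately show ?thesis unfolding NQ_def by blast
qed

lemma helper:
  assumes Q: "congruence d Q" and Q': "congruence d Q'" and sub: "Q \<subseteq> Q'"
    and xm: "(x, mx) \<in> Q" and ym: "(y, my) \<in> Q" and xy: "(x, y) \<in> Q'"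
    and minx: "\<forall>z. (x, z) \<in> Q \<longrightarrow> \<not> grl z mx"
    and g: "grl my mx"
  shows "mx \<in> NQ d Q' \<and> mx \<notin> NQ d Q \<and> sum_list mx \<le> sum_list x"
proof -
  have eQ: "equiv (vecs d) Q" and eQ': "equiv (vecs d) Q'" using Q Q' unfolding congruence_def by auto
  have "(mx, x) \<in> Q" using xm eQ unfolding equiv_def sym_def by blast
  then have "(mx, y) \<in> Q'" using sub xy eQ' unfolding equiv_def trans_def by blast
  then have "(mx, my) \<in> Q'" using sub ym eQ' unfolding equiv_def trans_def by blast
  moreover have mxv: "mx \<in> vecs d" using cong_sub[OF Q xm] by blast
  ultimately have 1: "mx \<in> NQ d Q'" using g unfolding NQ_def by blast
  have 2: "mx \<notin> NQ d Q"
  proof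
    assume "mx \<in> NQ d Q"
    then obtain b where "(mx, b) \<in> Q" "grl b mx" unfolding NQ_def by blast
    moreover have "(x, b) \<in> Q" using xm \<open>(mx, b) \<in> Q\<close> eQ unfolding equiv_def trans_def by blast
    ultimately show False using minx by blast
  qed
  have xv: "x \<in> vecs d" using cong_sub[OF Q xm] by blast
  have "(x, x) \<in> Q" using xv eQ unfolding equiv_def refl_on_def by blast
  then have "\<not> grl x mx" using minx by blast
  then have "mx = x \<or> grl mx x" using grl_total[of mx x] mxv xv unfolding vecs_def by auto
  then have "sum_list mx \<le> sum_list x" unfolding grl_def by auto
  then show ?thesis using 1 2 by blast
qed

lemma witness:
  assumes Q: "congruence d Q" and Q': "congruence d Q'" and sub: "Q \<subseteq> Q'"
    and ab: "(a, b) \<in> Q'" "(a, b) \<notin> Q"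
  shows "\<exists>u. u \<in> NQ d Q' \<and> u \<notin> NQ d Q \<and> sum_list u \<le> max (sum_list a) (sum_list b)"
proof -
  have eQ: "equiv (vecs d) Q" and eQ': "equiv (vecs d) Q'" using Q Q' unfolding congruence_def by auto
  have av: "a \<in> vecs d" and bv: "b \<in> vecs d" using cong_sub[OF Q' ab(1)] by auto
  have aa: "(a, a) \<in> Q" using av eQ unfolding equiv_def refl_on_def by blast
  have bb: "(b, b) \<in> Q" using bv eQ unfolding equiv_def refl_on_def by blast
  obtain ma where ma: "ma \<in> {z. (a, z) \<in> Q}" "\<And>y. (y, ma) \<in> Rd d \<Longrightarrow> y \<notin> {z. (a, z) \<in> Q}"
    using wfE_min[OF wf_Rd, of a "{z. (a, z) \<in> Q}"] aa by blast
  obtain mb where mb: "mb \<in> {z. (b, z) \<in> Q}" "\<And>y. (y, mb) \<in> Rd d \<Longrightarrow> y \<notin> {z. (b, z) \<in> Q}"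
    using wfE_min[OF wf_Rd, of b "{z. (b, z) \<in> Q}"] bb by blast
  have mav: "ma \<in> vecs d" and mbv: "mb \<in> vecs d" using ma(1) mb(1) cong_sub[OF Q] by auto
  have mina: "\<forall>z. (a, z) \<in> Q \<longrightarrow> \<not> grl z ma"
    using ma(2) mav cong_sub[OF Q] unfolding Rd_def by blast
  have minb: "\<forall>z. (b, z) \<in> Q \<longrightarrow> \<not> grl z mb"
    using mb(2) mbv cong_sub[OF Q] unfolding Rd_def by blast
  have "ma \<noteq> mb"
  proof
    assume "ma = mb"
    then have "(mb, b) \<in> Q" using mb(1) eQ unfolding equiv_def sym_def by blast
    then have "(a, b) \<in> Q" using ma(1) \<open>ma = mb\<close> eQ unfolding equiv_def trans_def by blast
    then show False using ab(2) by blast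
  qed
  then have "grl ma mb \<or> grl mb ma" using grl_total mav mbv unfolding vecs_def by auto
  then show ?thesis
  proof
    assume "grl mb ma"
    from helper[OF Q Q' sub _ _ ab(1) mina this] ma(1) mb(1) show ?thesis by force
  next
    assume "grl ma mb"
    have "(b, a) \<in> Q'" using ab(1) eQ' unfolding equiv_def sym_def by blast
    from helper[OF Q Q' sub _ _ this minb \<open>grl ma mb\<close>] ma(1) mb(1) show ?thesis by force
  qed
qed

lemma vnorm_ge: "x \<in> set v \<Longrightarrow> x \<le> vnorm v"
  unfolding vnorm_def by (induction v) auto

lemma sum_le_len: "\<forall>x\<in>set v. x \<le> M \<Longrightarrow> sum_list v \<le> length v * (M::nat)"
  by (induction v) auto

lemma vle_vadd: "length a = length b \<Longrightarrow> vle a b \<Longrightarrow> vadd a (map2 (-) b a) = b"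
  unfolding vle_def vadd_def by (auto simp: list_all2_conv_all_nth intro!: nth_equalityI)



theorem lemma15:
  fixes g :: "nat \<Rightarrow> nat" and n d l :: nat
    and Q :: "nat \<Rightarrow> (nat list \<times> nat list) set"
  assumes "mono g"
    and "\<forall>x. g x > x"
    and "\<forall>x y. x \<ge> 1 \<longrightarrow> y \<ge> 1 \<longrightarrow> g (x * y) \<ge> g x * y"
    and "\<forall>i\<le>l. congruence d (Q i)"
    and "controlled_chain g n pnorm Q l"
  shows "l \<le> 1 + hardy_omega_pow g (4 * d) (4 * d * n)"
proof -
  interpret gass g using assms(1,2) by unfold_locales auto
  have chain: "\<forall>i<l. Q i \<subset> Q (Suc i)" and wit: "\<forall>i<l. \<exists>s \<in> Q (Suc i) - Q i. pnorm s \<le> (g ^^ i) n"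
    using assms(5) unfolding controlled_chain_def by auto
  have qmono: "Q i \<subseteq> Q j" if "i \<le> j" "j \<le> l" for i j
    using that
  proof (induction j)
    case 0 then show ?case by simp
  next
    case (Suc j)
    show ?case
    proof (cases "i = Suc j")
      case True then show ?thesis by simp
    next
      case False
      then have "Q i \<subseteq> Q j" using Suc by simp
      also have "Q j \<subseteq> Q (Suc j)"
      proof -
        have "j < l" using Suc.prems by simp
        then show ?thesis using chain by blast
      qed
      finally show ?thesis .
    qed
  qed
  show ?thesis
  proof (cases "n = 0")
    case True
    have "l = 0"
    proof (rule ccontr)
      assume "l \<noteq> 0"
      then obtain s where s: "s \<in> Q 1 - Q 0" "pnorm s \<le> n" using wit by fastforce
      obtain a b where ab: "s = (a, b)" by fastforce
      have c1: "congruence d (Q 1)" and c0: "congruence d (Q 0)" using assms(4) \<open>l \<noteq> 0\<close> by auto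
      have av: "a \<in> vecs d" "b \<in> vecs d" using cong_sub[OF c1] s ab by auto
      have "\<forall>x\<in>set (a @ b). x \<le> 0" using vnorm_ge s True ab unfolding pnorm_def
        by (metis fst_conv snd_conv le_trans)
      then have z: "\<forall>x\<in>set a. x = 0" "\<forall>x\<in>set b. x = 0" by auto
      have "a = b"
      proof (rule nth_equalityI)
        show "length a = length b" using av unfolding vecs_def by simp
        fix i assume "i < length a"
        then have "a ! i = 0" "b ! i = 0" using z nth_mem \<open>length a = length b\<close> by metis+
        then show "a ! i = b ! i" by simp
      qed
      moreover have "(a, a) \<in> Q 0" using c0 av unfolding congruence_def equiv_def refl_on_def by blast
      ultimately show False using s ab by auto
    qed
    then show ?thesis by simp
  next
    case False
    then have n1: "n \<ge> 1" by simp
    have "\<forall>i<l. \<exists>u. u \<in> NQ d (Q (Suc i)) \<and> u \<notin> NQ d (Q i) \<and> sum_list u \<le> d * (g ^^ i) n"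
    proof (intro allI impI)
      fix i assume i: "i < l"
      obtain s where s: "s \<in> Q (Suc i) - Q i" "pnorm s \<le> (g ^^ i) n" using wit i by blast
      obtain a b where ab: "s = (a, b)" by fastforce
      have c1: "congruence d (Q (Suc i))" and c0: "congruence d (Q i)" using assms(4) i by auto
      have av: "a \<in> vecs d" "b \<in> vecs d" using cong_sub[OF c1] s ab by auto
      have pa: "pnorm s = vnorm (a @ b)" using ab pnorm_def by simp
      have all: "\<forall>x\<in>set (a @ b). x \<le> (g ^^ i) n"
      proof
        fix x assume "x \<in> set (a @ b)"
        then have "x \<le> vnorm (a @ b)" by (rule vnorm_ge)
        then show "x \<le> (g ^^ i) n" using s(2) pa by simp
      qed
      have "sum_list a \<le> length a * (g ^^ i) n" by (rule sum_le_len) (use all in auto)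
      then have sa: "sum_list a \<le> d * (g ^^ i) n" using av unfolding vecs_def by simp
      have "sum_list b \<le> length b * (g ^^ i) n" by (rule sum_le_len) (use all in auto)
      then have sb: "sum_list b \<le> d * (g ^^ i) n" using av unfolding vecs_def by simp
      obtain u where "u \<in> NQ d (Q (Suc i))" "u \<notin> NQ d (Q i)" "sum_list u \<le> max (sum_list a) (sum_list b)"
        using witness[OF c0 c1 _, of a b] chain i s ab by auto
      then show "\<exists>u. u \<in> NQ d (Q (Suc i)) \<and> u \<notin> NQ d (Q i) \<and> sum_list u \<le> d * (g ^^ i) n"
        using sa sb by (intro exI[of _ u]) auto
    qed
    then obtain u where u: "\<forall>i<l. u i \<in> NQ d (Q (Suc i)) \<and> u i \<notin> NQ d (Q i) \<and> sum_list (u i) \<le> d * (g ^^ i) n"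
      by metis
    have lenu: "\<forall>j<l. length (u j) = d" using u unfolding NQ_def vecs_def by auto
    have sumu: "\<forall>j<l. sum_list (u j) \<le> d * (g^^j) n" using u by auto
    have badu: "\<forall>i j. i < j \<longrightarrow> j < l \<longrightarrow> \<not> vle (u i) (u j)"
    proof (intro allI impI notI)
      fix i j assume ij: "i < j" "j < l" and le: "vle (u i) (u j)"
      have "u i \<in> NQ d (Q (Suc i))" using u ij by auto
      also have "\<dots> \<subseteq> NQ d (Q j)" using qmono[of "Suc i" j] ij NQ_mono by auto
      finally have ui: "u i \<in> NQ d (Q j)" .
      have "map2 (-) (u j) (u i) \<in> vecs d" using lenu ij unfolding vecs_def by auto
      then have "vadd (u i) (map2 (-) (u j) (u i)) \<in> NQ d (Q j)"
        using NQ_up[OF _ ui] assms(4) ij by auto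
      then have "u j \<in> NQ d (Q j)" using vle_vadd[OF _ le] lenu ij by auto
      then show False using u ij by auto
    qed
    have "l - 0 \<le> hardy g (sort (map (length \<circ> fst) [([0..<d], replicate d (0::nat))])) (d * n) - d * n"
    proof (rule bad_len[OF assms(3) n1 lenu sumu badu])
      show "\<forall>j. 0 \<le> j \<longrightarrow> j < l \<longrightarrow> (\<exists>s\<in>set [([0..<d], replicate d (0::nat))]. inslice d s (u j))"
        unfolding inslice_def by auto
      show "\<forall>s\<in>set [([0..<d], replicate d (0::nat))]. distinct (fst s) \<and> set (fst s) \<subseteq> {..<d}"
        by auto
    qed auto
    then have "l \<le> hardy g [d] (d * n)" by simp
    also have "\<dots> \<le> hardy g [d] (4 * d * n)" using hh_mono by simp
    also have "\<dots> \<le> hardy g [4 * d] (4 * d * n)" using hh_le by simp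
    finally show ?thesis unfolding hardy_omega_pow_def by simp
  qed
qed


end
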